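(* Let $\sigma:[0,\infty)\to[0,\infty)$ be nondecreasing with $\lim_{t\to\infty}\sigma(t)=\infty$. If $\gamma(\sigma)>0$, then $\gamma(\sigma)+1=\gamma((\sigma^{\iota})_{\star})$.
   Context: $\sigma^{\iota}(t):=\sigma(1/t)$ for $t>0$. For $h:(0,\infty)\to[0,\infty)$ nonincreasing with $\lim_{t\to0}h(t)=\infty$, $h_{\star}(t):=\inf_{s>0}\{h(s)+ts\}$ for $t\ge0$. For a nondecreasing function $\sigma$ tending to $\infty$ and $\gamma>0$, $(P_{\sigma,\gamma})$ holds if there is $K>1$ with $\limsup_{t\to\infty}\sigma(K^{\gamma}t)/\sigma(t)<K$; $\gamma(\sigma):=\sup\{\gamma>0:(P_{\sigma,\gamma})\text{ holds}\}$, and $:=0$ if none holds. *)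

theory Defs
  imports "HOL-Analysis.Analysis"
begin

definition iota :: "(real \<Rightarrow> real) \<Rightarrow> real \<Rightarrow> real" where
  "iota \<sigma> t = \<sigma> (1 / t)"

definition lstar :: "(real \<Rightarrow> real) \<Rightarrow> real \<Rightarrow> real" where
  "lstar h t = Inf ((\<lambda>s. h s + t * s) ` {0<..})"

definition P_prop :: "(real \<Rightarrow> real) \<Rightarrow> real \<Rightarrow> bool" where
  "P_prop \<sigma> \<gamma> \<longleftrightarrow> (\<exists>K>1. Limsup at_top (\<lambda>t. ereal (\<sigma> (K powr \<gamma> * t) / \<sigma> t)) < ereal K)"

definition gamma_idx :: "(real \<Rightarrow> real) \<Rightarrow> ereal" where
  "gamma_idx \<sigma> = (if {\<gamma>::real. \<gamma> > 0 \<and> P_prop \<sigma> \<gamma>} = {} then 0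
     else Sup (ereal ` {\<gamma>::real. \<gamma> > 0 \<and> P_prop \<sigma> \<gamma>}))"

end

theory Submission
  imports Defs
begin

lemma P_D:
  assumes "P_prop f \<gamma>"
  shows "\<exists>K>1. \<exists>L<K. \<exists>T. \<forall>t\<ge>T. f (K powr \<gamma> * t) / f t \<le> L"
proof -
  obtain K where K: "K > 1" "Limsup at_top (\<lambda>t. ereal (f (K powr \<gamma> * t) / f t)) < ereal K"
    using assms unfolding P_prop_def by blast
  obtain z where z: "Limsup at_top (\<lambda>t. ereal (f (K powr \<gamma> * t) / f t)) < ereal z" "ereal z < ereal K"
    using ereal_dense2[OF K(2)] by blast
  have "eventually (\<lambda>t. ereal (f (K powr \<gamma> * t) / f t) < ereal z) at_top"
    using Limsup_lessD[OF z(1)] .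
  then obtain T where T: "\<forall>t\<ge>T. ereal (f (K powr \<gamma> * t) / f t) < ereal z"
    by (auto simp: eventually_at_top_linorder)
  have "\<forall>t\<ge>T. f (K powr \<gamma> * t) / f t \<le> z" using T by (auto intro: less_imp_le)
  moreover have "z < K" using z(2) by simp
  ultimately show ?thesis using K(1) by blast
qed

lemma P_I:
  assumes "K > 1" "L < K" "\<And>t. t \<ge> T \<Longrightarrow> f (K powr \<gamma> * t) / f t \<le> L"
  shows "P_prop f \<gamma>"
proof -
  have "eventually (\<lambda>t. ereal (f (K powr \<gamma> * t) / f t) \<le> ereal L) at_top"
    using assms(3) by (auto simp: eventually_at_top_linorder)
  hence "Limsup at_top (\<lambda>t. ereal (f (K powr \<gamma> * t) / f t)) \<le> ereal L"
    by (rule Limsup_bounded)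
  also have "\<dots> < ereal K" using assms(2) by simp
  finally show ?thesis unfolding P_prop_def using assms(1) by blast
qed

lemma pw1: "K > 0 \<Longrightarrow> (K powr a) ^ m = K powr (a * real m)"
  by (simp add: powr_power mult.commute)

lemma pw2: "K > 0 \<Longrightarrow> (K ^ m) powr a = K powr (real m * a)"
  by (simp add: powr_realpow[symmetric] powr_powr)

context
  fixes \<sigma> :: "real \<Rightarrow> real"
  assumes nn: "\<And>t. t \<ge> 0 \<Longrightarrow> \<sigma> t \<ge> 0"
    and mo: "mono_on {0..} \<sigma>"
    and lim: "filterlim \<sigma> at_top at_top"
begin

lemma sm: "0 \<le> a \<Longrightarrow> a \<le> b \<Longrightarrow> \<sigma> a \<le> \<sigma> b"
  using mo by (auto simp: mono_on_def)

lemma g_le: "v > 0 \<Longrightarrow> t \<ge> 0 \<Longrightarrow> lstar (iota \<sigma>) t \<le> \<sigma> v + t / v"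
proof -
  assume v: "v > 0" and t: "t \<ge> 0"
  have bdd: "bdd_below ((\<lambda>s. iota \<sigma> s + t * s) ` {0<..})"
  proof (rule bdd_belowI[of _ 0])
    fix x assume "x \<in> (\<lambda>s. iota \<sigma> s + t * s) ` {0<..}"
    then obtain s where s: "s > 0" "x = \<sigma> (1/s) + t * s" by (auto simp: iota_def)
    have "\<sigma> (1/s) \<ge> 0" using nn s by simp
    moreover have "t * s \<ge> 0" using t s by simp
    ultimately show "0 \<le> x" using s by linarith
  qed
  have mem: "iota \<sigma> (1/v) + t * (1/v) \<in> (\<lambda>s. iota \<sigma> s + t * s) ` {0<..}"
    by (rule imageI) (use v in simp)
  have "lstar (iota \<sigma>) t \<le> iota \<sigma> (1/v) + t * (1/v)"
    unfolding lstar_def by (rule cInf_lower[OF mem bdd])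
  thus ?thesis by (simp add: iota_def)
qed

lemma g_ge: "(\<And>v. v > 0 \<Longrightarrow> c \<le> \<sigma> v + t / v) \<Longrightarrow> c \<le> lstar (iota \<sigma>) t"
proof -
  assume h: "\<And>v. v > 0 \<Longrightarrow> c \<le> \<sigma> v + t / v"
  show ?thesis unfolding lstar_def
  proof (rule cInf_greatest)
    show "(\<lambda>s. iota \<sigma> s + t * s) ` {0<..} \<noteq> {}" by auto
  next
    fix x assume "x \<in> (\<lambda>s. iota \<sigma> s + t * s) ` {0<..}"
    then obtain s where s: "s > 0" "x = \<sigma> (1/s) + t * s" by (auto simp: iota_def)
    have "c \<le> \<sigma> (1/s) + t / (1/s)" using h[of "1/s"] s by auto
    thus "c \<le> x" using s by simp
  qed
qed

lemma g_mono: "0 \<le> t \<Longrightarrow> t \<le> t' \<Longrightarrow> lstar (iota \<sigma>) t \<le> lstar (iota \<sigma>) t'"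
proof -
  assume a: "0 \<le> t" "t \<le> t'"
  show ?thesis
  proof (rule g_ge)
    fix v :: real assume v: "v > 0"
    have "lstar (iota \<sigma>) t \<le> \<sigma> v + t / v" using g_le v a by auto
    also have "\<dots> \<le> \<sigma> v + t' / v" using a v by (simp add: divide_right_mono)
    finally show "lstar (iota \<sigma>) t \<le> \<sigma> v + t' / v" .
  qed
qed

lemma g_scale: "1 \<le> l \<Longrightarrow> 0 \<le> t \<Longrightarrow> lstar (iota \<sigma>) (l * t) \<le> l * lstar (iota \<sigma>) t"
proof -
  assume a: "1 \<le> l" "0 \<le> t"
  have "lstar (iota \<sigma>) (l * t) / l \<le> lstar (iota \<sigma>) t"
  proof (rule g_ge)
    fix v :: real assume v: "v > 0"
    have "lstar (iota \<sigma>) (l * t) \<le> \<sigma> v + l * t / v" using g_le v a by auto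
    also have "\<dots> \<le> l * (\<sigma> v + t / v)"
    proof -
      have "\<sigma> v \<le> l * \<sigma> v" using nn[of v] v a by (simp add: mult_le_cancel_right1)
      thus ?thesis by (simp add: algebra_simps)
    qed
    finally have "lstar (iota \<sigma>) (l * t) \<le> l * (\<sigma> v + t / v)" .
    then show "lstar (iota \<sigma>) (l * t) / l \<le> \<sigma> v + t / v"
      using a by (subst divide_le_eq) (auto simp: algebra_simps)
  qed
  thus ?thesis using a by (subst (asm) divide_le_eq) (auto simp: algebra_simps)
qed

lemma g_pos: "t > 0 \<Longrightarrow> lstar (iota \<sigma>) t > 0"
proof -
  assume t: "t > 0"
  have "eventually (\<lambda>x. \<sigma> x \<ge> 1) at_top" using lim by (simp add: filterlim_at_top)
  then obtain U0 where U0: "\<And>x. x \<ge> U0 \<Longrightarrow> \<sigma> x \<ge> 1" by (auto simp: eventually_at_top_linorder)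
  define U where "U = max U0 1"
  have U: "U > 0" "\<And>x. x \<ge> U \<Longrightarrow> \<sigma> x \<ge> 1" using U0 by (auto simp: U_def)
  have "min 1 (t / U) \<le> lstar (iota \<sigma>) t"
  proof (rule g_ge)
    fix v :: real assume v: "v > 0"
    show "min 1 (t / U) \<le> \<sigma> v + t / v"
    proof (cases "v \<ge> U")
      case True
      then show ?thesis using U(2)[of v] t v by (smt (verit) divide_nonneg_pos)
    next
      case False
      then have "t / U \<le> t / v" using t v by (simp add: frac_le)
      then show ?thesis using nn[of v] v by linarith
    qed
  qed
  moreover have "min 1 (t / U) > 0" using t U by simp
  ultimately show ?thesis by linarith
qed

lemma g_upper: "v > 0 \<Longrightarrow> t > 0 \<Longrightarrow> t > v * lstar (iota \<sigma>) t \<Longrightarrow> \<sigma> v \<le> lstar (iota \<sigma>) t"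
proof (rule ccontr)
  assume v: "v > 0" and t: "t > 0" and tv: "t > v * lstar (iota \<sigma>) t"
    and c: "\<not> \<sigma> v \<le> lstar (iota \<sigma>) t"
  have "min (\<sigma> v) (t / v) \<le> lstar (iota \<sigma>) t"
  proof (rule g_ge)
    fix u :: real assume u: "u > 0"
    show "min (\<sigma> v) (t / v) \<le> \<sigma> u + t / u"
    proof (cases "u \<ge> v")
      case True
      then show ?thesis using sm[of v u] v t u by (smt (verit) divide_nonneg_pos)
    next
      case False
      then have "t / v \<le> t / u" using t u by (simp add: frac_le)
      then show ?thesis using nn[of u] u by linarith
    qed
  qed
  moreover have "t / v > lstar (iota \<sigma>) t" using tv v by (simp add: field_simps)
  ultimately show False using c by linarith
qed

lemma g_small: "e > 0 \<Longrightarrow> \<exists>T. \<forall>t\<ge>T. lstar (iota \<sigma>) t \<le> e * t"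
proof -
  assume e: "e > 0"
  define v where "v = 2 / e"
  have v: "v > 0" using e by (simp add: v_def)
  show ?thesis
  proof (intro exI allI impI)
    fix t assume t: "t \<ge> max 0 (2 * \<sigma> v / e)"
    have "lstar (iota \<sigma>) t \<le> \<sigma> v + t / v" using g_le[of v t] v t by auto
    also have "\<dots> = \<sigma> v + e * t / 2" using e by (simp add: v_def)
    also have "\<dots> \<le> e * t"
    proof -
      have "2 * \<sigma> v / e \<le> t" using t by linarith
      hence "2 * \<sigma> v \<le> e * t" using e by (simp add: divide_le_eq mult.commute)
      thus ?thesis by linarith
    qed
    finally show "lstar (iota \<sigma>) t \<le> e * t" .
  qed
qed


lemma sig_pos: "\<exists>T\<ge>1. \<forall>t\<ge>T. \<sigma> t > 0"
proof -
  have "eventually (\<lambda>x. \<sigma> x \<ge> 1) at_top" using lim by (simp add: filterlim_at_top)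
  then obtain U0 where U0: "\<And>x. x \<ge> U0 \<Longrightarrow> \<sigma> x \<ge> 1" by (auto simp: eventually_at_top_linorder)
  show ?thesis
    by (rule exI[of _ "max U0 1"]) (use U0 in \<open>fastforce\<close>)
qed

lemma partA:
  assumes gp: "\<gamma> > 0" and P: "P_prop \<sigma> \<gamma>"
  shows "P_prop (lstar (iota \<sigma>)) (\<gamma> + 1)"
proof -
  define g where "g = lstar (iota \<sigma>)"
  obtain K L T0 where K: "K > 1" "L < K" and T0: "\<And>t. t \<ge> T0 \<Longrightarrow> \<sigma> (K powr \<gamma> * t) / \<sigma> t \<le> L"
    using P_D[OF P] by blast
  obtain T1 where T1: "T1 \<ge> 1" "\<And>t. t \<ge> T1 \<Longrightarrow> \<sigma> t > 0" using sig_pos by blast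
  define T where "T = max T0 T1"
  have T: "T \<ge> 1" "T \<ge> T0" "T \<ge> T1" using T1 by (auto simp: T_def)
  have Kg: "K powr \<gamma> \<ge> 1" using K gp by (simp add: ge_one_powr_ge_zero)
  have st: "\<sigma> (K powr \<gamma> * t) \<le> L * \<sigma> t" if "t \<ge> T" for t
  proof -
    have "\<sigma> t > 0" using T1(2)[of t] T that by simp
    thus ?thesis using T0[of t] T that by (simp add: divide_le_eq)
  qed
  have L1: "L \<ge> 1"
  proof -
    have "\<sigma> T \<le> \<sigma> (K powr \<gamma> * T)" using sm[of T "K powr \<gamma> * T"] Kg T by simp
    also have "\<dots> \<le> L * \<sigma> T" using st by simp
    finally show ?thesis using T1(2)[of T] T by simp
  qed
  have iter: "\<sigma> (K powr (\<gamma> * real j) * t) \<le> L ^ j * \<sigma> t" if "t \<ge> T" for j t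
  proof (induction j)
    case 0
    then show ?case using K by simp
  next
    case (Suc j)
    have e: "K powr (\<gamma> * real (Suc j)) * t = K powr \<gamma> * (K powr (\<gamma> * real j) * t)"
      by (simp add: algebra_simps powr_add)
    have "K powr (\<gamma> * real j) \<ge> 1" using K gp by (simp add: ge_one_powr_ge_zero)
    hence ge: "K powr (\<gamma> * real j) * t \<ge> T" using that T by (smt (verit) mult_le_cancel_right1)
    have "\<sigma> (K powr (\<gamma> * real (Suc j)) * t) \<le> L * \<sigma> (K powr (\<gamma> * real j) * t)"
      unfolding e by (rule st[OF ge])
    also have "\<dots> \<le> L * (L ^ j * \<sigma> t)" using Suc L1 by simp
    finally show ?case by simp
  qed
  obtain N where N: "(L / K) ^ N < 1 / L"
    using real_arch_pow_inv[of "1/L" "L/K"] K L1 by auto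
  define n where "n = Suc N"
  have n1: "n \<ge> 1" by (simp add: n_def)
  have LK: "L ^ (n+1) < K ^ n"
  proof -
    have "(L / K) ^ n \<le> (L / K) ^ N" unfolding n_def
      using K L1 by (intro power_decreasing) auto
    hence "(L / K) ^ n < 1 / L" using N by simp
    hence "L * (L ^ n / K ^ n) < 1" using L1 by (simp add: power_divide field_simps)
    thus ?thesis using K by (simp add: field_simps)
  qed
  define a where "a = K powr (\<gamma> * real (n+1))"
  define M where "M = max (L ^ (n+1)) (K powr (real n - \<gamma>))"
  define lam where "lam = (K ^ n) powr (\<gamma> + 1)"
  have Mpos: "M > 0" using K by (simp add: M_def less_max_iff_disj)
  have MK: "M < K ^ n"
  proof -
    have "K powr (real n - \<gamma>) < K powr (real n)" using K gp by simp
    also have "\<dots> = K ^ n" using K by (simp add: powr_realpow)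
    finally show ?thesis using LK by (simp add: M_def)
  qed
  have apos: "a > 0" using K by (simp add: a_def)
  have lama: "lam / a = K powr (real n - \<gamma>)"
  proof -
    have "lam = K powr (real n * (\<gamma> + 1))" using K by (simp add: lam_def pw2)
    hence "lam / a = K powr (real n * (\<gamma> + 1) - \<gamma> * real (n+1))"
      by (simp add: a_def powr_diff)
    also have "real n * (\<gamma> + 1) - \<gamma> * real (n+1) = real n - \<gamma>"
      by (simp add: algebra_simps)
    finally show ?thesis .
  qed
  have lampos: "lam > 0" using K by (simp add: lam_def)
  have lam1: "lam \<ge> 1" using K n1 gp by (simp add: lam_def ge_one_powr_ge_zero)
  have case1: "g (lam * t) \<le> M * (\<sigma> v + t / v)" if v: "v \<ge> T" and t: "t \<ge> 0" for v t
  proof -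
    have vp: "v > 0" using v T by simp
    have "g (lam * t) \<le> \<sigma> (a * v) + lam * t / (a * v)"
      unfolding g_def using g_le[of "a * v" "lam * t"] apos vp t lampos by simp
    also have "\<sigma> (a * v) \<le> L ^ (n+1) * \<sigma> v"
      using iter[OF v, of "n+1"] by (simp add: a_def)
    also have "lam * t / (a * v) = K powr (real n - \<gamma>) * (t / v)"
      using lama apos vp by (simp add: field_simps)
    also have "L ^ (n+1) * \<sigma> v + K powr (real n - \<gamma>) * (t / v) \<le> M * \<sigma> v + M * (t / v)"
      using nn[of v] vp t unfolding M_def
      by (intro add_mono mult_right_mono) auto
    finally show ?thesis by (simp add: algebra_simps)
  qed
  define c where "c = max 1 (2 * M)"
  define v0 where "v0 = c * T"
  have v0T: "v0 \<ge> T" using T by (simp add: v0_def c_def)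
  have v0c: "M / v0 \<le> 1 / (2 * T)"
  proof -
    have "2 * M * T \<le> v0" using T by (simp add: v0_def c_def)
    thus ?thesis using T Mpos v0T by (simp add: field_simps)
  qed
  define t1 where "t1 = max 1 (2 * T * M * \<sigma> v0)"
  have key: "g (lam * t) \<le> M * g t" if t: "t \<ge> t1" for t
  proof -
    have tp: "t > 0" using t by (simp add: t1_def)
    have "g (lam * t) / M \<le> g t"
      unfolding g_def
    proof (rule g_ge)
      fix v :: real assume vp: "v > 0"
      have "g (lam * t) \<le> M * (\<sigma> v + t / v)"
      proof (cases "v \<ge> T")
        case True
        then show ?thesis using case1 tp by simp
      next
        case False
        have "g (lam * t) \<le> M * (\<sigma> v0 + t / v0)" using case1[OF v0T] tp by simp
        also have "\<dots> = M * \<sigma> v0 + (M / v0) * t" by (simp add: algebra_simps)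
        also have "\<dots> \<le> M * \<sigma> v0 + t / (2 * T)"
        proof -
          have "(M / v0) * t \<le> (1 / (2 * T)) * t" using v0c tp by (intro mult_right_mono) auto
          thus ?thesis by simp
        qed
        also have "\<dots> \<le> t / T"
        proof -
          have "2 * T * M * \<sigma> v0 \<le> t" using t by (simp add: t1_def)
          hence "M * \<sigma> v0 \<le> t / (2 * T)" using T by (simp add: field_simps)
          thus ?thesis by (simp add: field_simps)
        qed
        also have "\<dots> \<le> t / v" using False vp tp by (simp add: frac_le)
        also have "\<dots> \<le> M * (\<sigma> v + t / v)"
        proof -
          have "t / v \<le> \<sigma> v + t / v" using nn[of v] vp by simp
          moreover have "\<sigma> v + t / v \<le> M * (\<sigma> v + t / v)"
          proof -
            have "L ^ (n+1) \<ge> 1" using L1 by (rule one_le_power)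
            hence "M \<ge> 1" unfolding M_def by linarith
            moreover have "\<sigma> v + t / v \<ge> 0" using nn[of v] vp tp by simp
            ultimately show ?thesis by (simp add: mult_le_cancel_right1)
          qed
          ultimately show ?thesis by linarith
        qed
        finally show ?thesis .
      qed
      thus "lstar (iota \<sigma>) (lam * t) / M \<le> \<sigma> v + t / v" using Mpos
        unfolding g_def by (subst divide_le_eq) (auto simp: algebra_simps)
    qed
    thus ?thesis using Mpos by (subst (asm) divide_le_eq) (auto simp: algebra_simps)
  qed
  show ?thesis
  proof (rule P_I[of "K ^ n" M t1])
    show "1 < K ^ n" using K n1 by simp
    show "M < K ^ n" by (rule MK)
  next
    fix t assume t: "t \<ge> t1"
    have tp: "t > 0" using t by (simp add: t1_def)
    have "g t > 0" unfolding g_def using g_pos tp by simp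
    thus "lstar (iota \<sigma>) ((K ^ n) powr (\<gamma> + 1) * t) / lstar (iota \<sigma>) t \<le> M"
      using key[OF t] unfolding g_def lam_def by (simp add: divide_le_eq)
  qed
qed


lemma partB:
  assumes b1: "\<beta> > 1" and P: "P_prop (lstar (iota \<sigma>)) \<beta>"
  shows "P_prop \<sigma> (\<beta> - 1)"
proof -
  define g where "g = lstar (iota \<sigma>)"
  have gpos: "\<And>t. t > 0 \<Longrightarrow> g t > 0" unfolding g_def by (rule g_pos)
  obtain K L T0 where K: "K > 1" "L < K" and T0: "\<And>t. t \<ge> T0 \<Longrightarrow> g (K powr \<beta> * t) / g t \<le> L"
    using P_D[OF P] unfolding g_def by blast
  define T where "T = max T0 1"
  have T: "T \<ge> 1" "T \<ge> T0" by (auto simp: T_def)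
  define q where "q = K powr \<beta>"
  have q1: "q \<ge> 1" using K b1 by (simp add: q_def ge_one_powr_ge_zero)
  have st: "g (q * t) \<le> L * g t" if "t \<ge> T" for t
  proof -
    have "g t > 0" using gpos[of t] T that by simp
    thus ?thesis using T0[of t] T that by (simp add: divide_le_eq q_def)
  qed
  have Lpos: "L > 0"
  proof -
    have "0 < g (q * T)" using gpos q1 T by simp
    also have "\<dots> \<le> L * g T" using st by simp
    finally show ?thesis using gpos[of T] T by (simp add: zero_less_mult_iff)
  qed
  have iter: "g (q ^ j * t) \<le> L ^ j * g t" if "t \<ge> T" for j t
  proof (induction j)
    case 0
    then show ?case by simp
  next
    case (Suc j)
    have "q ^ j \<ge> 1" using q1 by (rule one_le_power)
    hence ge: "q ^ j * t \<ge> T" using that T by (smt (verit) mult_le_cancel_right1)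
    have "g (q ^ Suc j * t) = g (q * (q ^ j * t))" by (simp add: algebra_simps)
    also have "\<dots> \<le> L * g (q ^ j * t)" by (rule st[OF ge])
    also have "\<dots> \<le> L * (L ^ j * g t)" using Suc Lpos by simp
    finally show ?case by simp
  qed
  obtain m0 where m0: "4 < (K / L) ^ m0" using real_arch_pow[of "K / L" 4] K Lpos by auto
  define m where "m = Suc m0"
  have m4: "4 < (K / L) ^ m"
  proof -
    have "(K / L) ^ m0 \<le> (K / L) ^ m" unfolding m_def
      using K Lpos by (intro power_increasing) auto
    thus ?thesis using m0 by linarith
  qed
  have m4': "4 * L ^ m < K ^ m" using m4 Lpos by (simp add: power_divide field_simps)
  have m2: "2 * L ^ m \<le> K ^ m" using m4' Lpos by (smt (verit) zero_less_power)
  define Lam where "Lam = (K ^ m) powr (\<beta> - 1)"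
  have Lampos: "Lam > 0" using K by (simp add: Lam_def)
  have qLam: "2 * Lam * L ^ m \<le> q ^ m"
  proof -
    have "q ^ m = K powr (\<beta> * real m)" using K by (simp add: q_def pw1)
    also have "\<dots> = K ^ m * Lam"
    proof -
      have "Lam = K powr (real m * (\<beta> - 1))" using K by (simp add: Lam_def pw2)
      moreover have "K ^ m = K powr (real m)" using K by (simp add: powr_realpow)
      ultimately have "K ^ m * Lam = K powr (real m + real m * (\<beta> - 1))" by (simp add: powr_add)
      also have "real m + real m * (\<beta> - 1) = \<beta> * real m" by (simp add: algebra_simps)
      finally show ?thesis by simp
    qed
    finally have "q ^ m = K ^ m * Lam" .
    moreover have "2 * L ^ m * Lam \<le> K ^ m * Lam" using m2 Lampos by simp
    ultimately show ?thesis by (simp add: algebra_simps)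
  qed
  obtain U1 where U1: "U1 \<ge> 1" "\<And>t. t \<ge> U1 \<Longrightarrow> \<sigma> t > 0" using sig_pos by blast
  define u0 where "u0 = max U1 (2 * T / g T)"
  have main: "\<sigma> (Lam * u) \<le> 4 * L ^ m * \<sigma> u" if u: "u \<ge> u0" for u
  proof -
    have up: "u > 0" using u U1 by (simp add: u0_def)
    have gT: "g T > 0" using gpos T by simp
    define Pj where "Pj = (\<lambda>j::nat. 2 ^ j * T > (u / 2) * g (2 ^ j * T))"
    have nP0: "\<not> Pj 0"
    proof -
      have "2 * T / g T \<le> u" using u by (simp add: u0_def)
      hence "2 * T \<le> u * g T" using gT by (simp add: divide_le_eq)
      thus ?thesis by (simp add: Pj_def)
    qed
    have exP: "\<exists>j. Pj j"
    proof -
      obtain T' where T': "\<forall>t\<ge>T'. lstar (iota \<sigma>) t \<le> (1 / u) * t"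
        using g_small[of "1/u"] up by auto
      obtain j where j: "T' / T < 2 ^ j" using real_arch_pow[of 2 "T' / T"] by auto
      have "T' \<le> 2 ^ j * T" using j T by (simp add: divide_less_eq)
      hence "g (2 ^ j * T) \<le> (1 / u) * (2 ^ j * T)" using T' unfolding g_def by blast
      hence "(u / 2) * g (2 ^ j * T) \<le> (u / 2) * ((1 / u) * (2 ^ j * T))"
        using up by (intro mult_left_mono) auto
      also have "\<dots> = 2 ^ j * T / 2" using up by simp
      also have "\<dots> < 2 ^ j * T" using T by simp
      finally show ?thesis unfolding Pj_def by blast
    qed
    define j where "j = (LEAST j. Pj j)"
    have Pj: "Pj j" unfolding j_def using exP by (metis LeastI)
    have j0: "j \<noteq> 0" using Pj nP0 by (metis)
    have nPj: "\<not> Pj (j - 1)" unfolding j_def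
      using j0 j_def by (metis Least_le diff_less less_numeral_extra(1) linorder_not_le gr_zeroI)
    define t where "t = 2 ^ (j - 1) * T"
    have tt: "2 * t = 2 ^ j * T" using j0 by (simp add: t_def power_eq_if)
    have tT: "t \<ge> T" using T by (simp add: t_def)
    have tp: "t > 0" using tT T by simp
    have h1: "t \<le> (u / 2) * g t" using nPj by (simp add: Pj_def t_def)
    have h2: "2 * t > (u / 2) * g (2 * t)" using Pj by (simp add: Pj_def tt)
    have gt: "g t > 0" using gpos tp by simp
    have g2t: "g (2 * t) > 0" using gpos tp by simp
    have s1: "g t \<le> 2 * \<sigma> u"
    proof -
      have "g t \<le> \<sigma> u + t / u" unfolding g_def using g_le up tp by simp
      moreover have "t / u \<le> g t / 2" using h1 up by (simp add: divide_le_eq field_simps)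
      ultimately show ?thesis by linarith
    qed
    define t' where "t' = q ^ m * (2 * t)"
    have t'p: "t' > 0" using q1 tp by (simp add: t'_def)
    have g1: "g t' \<le> L ^ m * g (2 * t)" unfolding t'_def using iter[of "2 * t" m] tT tp by simp
    have g2: "g (2 * t) \<le> 2 * g t" unfolding g_def using g_scale[of 2 t] tp by simp
    have gt'p: "g t' > 0" using gpos t'p by simp
    have cond: "t' > (Lam * u) * g t'"
    proof -
      have "(Lam * u) * g t' \<le> (Lam * u) * (L ^ m * g (2 * t))"
        using g1 Lampos up by simp
      also have "\<dots> = Lam * L ^ m * (u * g (2 * t))" by (simp add: algebra_simps)
      also have "\<dots> < Lam * L ^ m * (4 * t)"
      proof -
        have "u * g (2 * t) < 4 * t" using h2 by simp
        thus ?thesis using Lampos Lpos by simp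
      qed
      also have "\<dots> = (2 * Lam * L ^ m) * (2 * t)" by simp
      also have "\<dots> \<le> q ^ m * (2 * t)" using qLam tp by (intro mult_right_mono) auto
      finally show ?thesis by (simp add: t'_def)
    qed
    have "\<sigma> (Lam * u) \<le> g t'" unfolding g_def
      using g_upper[of "Lam * u" t'] Lampos up t'p cond unfolding g_def by simp
    also have "\<dots> \<le> L ^ m * (2 * g t)" using g1 g2 Lpos
      by (smt (verit) mult_left_mono zero_less_power)
    also have "\<dots> \<le> L ^ m * (2 * (2 * \<sigma> u))" using s1 Lpos by simp
    finally show ?thesis by simp
  qed
  show ?thesis
  proof (rule P_I[of "K ^ m" "4 * L ^ m" u0])
    show "1 < K ^ m" using K by (intro one_less_power) (auto simp: m_def)
    show "4 * L ^ m < K ^ m" by (rule m4')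
  next
    fix u assume u: "u \<ge> u0"
    have "\<sigma> u > 0" using U1 u by (simp add: u0_def)
    thus "\<sigma> ((K ^ m) powr (\<beta> - 1) * u) / \<sigma> u \<le> 4 * L ^ m"
      using main[OF u] unfolding Lam_def by (simp add: divide_le_eq)
  qed
qed

end


theorem corollary2p26:
  fixes \<sigma> :: "real \<Rightarrow> real"
  assumes "\<And>t. t \<ge> 0 \<Longrightarrow> \<sigma> t \<ge> 0"
    and "mono_on {0..} \<sigma>"
    and "filterlim \<sigma> at_top at_top"
    and "gamma_idx \<sigma> > 0"
  shows "gamma_idx \<sigma> + 1 = gamma_idx (lstar (iota \<sigma>))"
proof -
  define S where "S = {\<gamma>::real. \<gamma> > 0 \<and> P_prop \<sigma> \<gamma>}"
  define Sg where "Sg = {\<gamma>::real. \<gamma> > 0 \<and> P_prop (lstar (iota \<sigma>)) \<gamma>}"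
  have Sne: "S \<noteq> {}" using assms(4) by (auto simp: gamma_idx_def S_def split: if_splits)
  then obtain \<gamma>0 where g0: "\<gamma>0 \<in> S" by blast
  have A: "\<gamma> + 1 \<in> Sg" if "\<gamma> \<in> S" for \<gamma>
    using partA[OF assms(1-3)] that by (auto simp: S_def Sg_def)
  have B: "\<beta> - 1 \<in> S" if "\<beta> \<in> Sg" "\<beta> > 1" for \<beta>
    using partB[OF assms(1-3)] that by (auto simp: S_def Sg_def)
  have Sgne: "Sg \<noteq> {}" using A[OF g0] by blast
  have e1: "gamma_idx \<sigma> = Sup (ereal ` S)" unfolding gamma_idx_def S_def[symmetric] using Sne by (simp only: if_False)
  have e2: "gamma_idx (lstar (iota \<sigma>)) = Sup (ereal ` Sg)" unfolding gamma_idx_def Sg_def[symmetric] using Sgne by (simp only: if_False)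
  have "Sup (ereal ` S) + 1 = (SUP \<gamma>\<in>S. ereal \<gamma> + 1)"
    using SUP_ereal_add_left[OF Sne, of "1" ereal] by simp
  also have "\<dots> = Sup (ereal ` Sg)"
  proof (rule antisym)
    show "(SUP \<gamma>\<in>S. ereal \<gamma> + 1) \<le> Sup (ereal ` Sg)"
    proof (rule SUP_least)
      fix \<gamma> assume "\<gamma> \<in> S"
      hence "ereal (\<gamma> + 1) \<le> Sup (ereal ` Sg)" using A by (intro SUP_upper) auto
      thus "ereal \<gamma> + 1 \<le> Sup (ereal ` Sg)" by simp
    qed
  next
    show "Sup (ereal ` Sg) \<le> (SUP \<gamma>\<in>S. ereal \<gamma> + 1)"
    proof (rule SUP_least)
      fix \<beta> assume b: "\<beta> \<in> Sg"
      show "ereal \<beta> \<le> (SUP \<gamma>\<in>S. ereal \<gamma> + 1)"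
      proof (cases "\<beta> > 1")
        case True
        have "ereal (\<beta> - 1) + 1 \<le> (SUP \<gamma>\<in>S. ereal \<gamma> + 1)"
          using B[OF b True] by (intro SUP_upper)
        thus ?thesis by simp
      next
        case False
        have "\<gamma>0 > 0" using g0 by (simp add: S_def)
        hence "ereal \<beta> \<le> ereal \<gamma>0 + 1" using False by simp
        also have "\<dots> \<le> (SUP \<gamma>\<in>S. ereal \<gamma> + 1)" using g0 by (intro SUP_upper)
        finally show ?thesis .
      qed
    qed
  qed
  finally show ?thesis using e1 e2 by simp
qed

end
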